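(* Consider a combinatorial auction with $2$ bidders and $2$ items $a,b$, where both bidders have general monotone valuations. Let $\mathcal M_3$ be the randomized mechanism that with probability $1/3$ runs an ascending second-price auction on the grand bundle $\{a,b\}$, and with probability $2/3$ allocates a uniformly random item to a uniformly random bidder and then runs an ascending second-price auction for the remaining item among both bidders. Then $\mathcal M_3$ achieves a $\frac{3}{2}$-approximation to the optimal social welfare: on every instance its expected welfare under truthful play is at least $\frac23\mathrm{OPT}$.
   Context: A valuation $v:2^{\{a,b\}}\to\mathbb{R}_{\ge0}$ is (general) monotone if $v(T)\le v(T')$ whenever $T\subseteq T'$. In the auction for the remaining item, each bidder bids her marginal value for that item given the bundle she already holds; the highest bidder wins. In the grand-bundle auction, the bidder with the highest value for $\{a,b\}$ wins both items. $\mathrm{OPT}$ is the maximum of $v_1(T_1)+v_2(T_2)$ over disjoint $T_1,T_2\subseteq\{a,b\}$. *)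

theory Defs
  imports Complex_Main
begin

datatype item = ItemA | ItemB

type_synonym valuation = "item set \<Rightarrow> real"

definition other_item :: "item \<Rightarrow> item" where
  "other_item x = (if x = ItemA then ItemB else ItemA)"

definition other_bidder :: "nat \<Rightarrow> nat" where
  "other_bidder i = (if i = 1 then 2 else 1)"

definition monotone_val :: "valuation \<Rightarrow> bool" where
  "monotone_val v \<longleftrightarrow> (\<forall>T. 0 \<le> v T) \<and> (\<forall>T T'. T \<subseteq> T' \<longrightarrow> v T \<le> v T')"

(* bidders are 1 and 2; vs i is the valuation of bidder i *)

definition OPT :: "(nat \<Rightarrow> valuation) \<Rightarrow> real" where
  "OPT vs = Max {vs 1 T1 + vs 2 T2 | T1 T2. T1 \<subseteq> {ItemA, ItemB} \<and> T2 \<subseteq> {ItemA, ItemB} \<and> T1 \<inter> T2 = {}}"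

definition grand_welfare :: "bool \<Rightarrow> (nat \<Rightarrow> valuation) \<Rightarrow> real" where
  "grand_welfare tie vs =
     (if vs 1 {ItemA, ItemB} > vs 2 {ItemA, ItemB} \<or> (vs 1 {ItemA, ItemB} = vs 2 {ItemA, ItemB} \<and> tie)
      then vs 1 {ItemA, ItemB} + vs 2 {}
      else vs 2 {ItemA, ItemB} + vs 1 {})"

(* Bidder i first receives item x; then an auction for the remaining item y among both
   bidders, each bidding her marginal value for y given her current bundle; highest bid wins,
   tie = True means bidder i (the holder) wins a tie. *)
definition item_welfare :: "bool \<Rightarrow> (nat \<Rightarrow> valuation) \<Rightarrow> item \<Rightarrow> nat \<Rightarrow> real" where
  "item_welfare tie vs x i =
     (let y = other_item x; j = other_bidder i;
          bid_i = vs i {x, y} - vs i {x};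
          bid_j = vs j {y} - vs j {}
      in if bid_i > bid_j \<or> (bid_i = bid_j \<and> tie)
         then vs i {x, y} + vs j {}
         else vs i {x} + vs j {y})"

definition M3_welfare :: "bool \<Rightarrow> (item \<Rightarrow> nat \<Rightarrow> bool) \<Rightarrow> (nat \<Rightarrow> valuation) \<Rightarrow> real" where
  "M3_welfare tg ti vs =
     1/3 * grand_welfare tg vs +
     2/3 * ((\<Sum>x\<in>{ItemA, ItemB}. \<Sum>i\<in>{1::nat, 2}. item_welfare (ti x i) vs x i) / 4)"

end

theory Submission
  imports Defs
begin

lemma pow_ab: "T \<subseteq> {ItemA, ItemB} \<Longrightarrow> T = {} \<or> T = {ItemA} \<or> T = {ItemB} \<or> T = {ItemA, ItemB}"
  by (metis (full_types) item.exhaust subset_insert subset_singletonD insert_commute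
      subset_antisym subsetI insertE empty_iff)

lemma arith_aux: "4 * (s::real) \<le> 2 * G + (a + b + c + d) \<Longrightarrow> s \<le> 3/2 * (1/3 * G + 2/3 * ((a + b + c + d) / 4))"
  by (simp add: field_simps)

theorem claimB5:
  fixes vs :: "nat \<Rightarrow> valuation" and tg :: bool and ti :: "item \<Rightarrow> nat \<Rightarrow> bool"
  assumes "monotone_val (vs 1)" and "monotone_val (vs 2)"
  shows "M3_welfare tg ti vs \<ge> 2/3 * OPT vs"
proof -
  have m1: "\<And>T T'. T \<subseteq> T' \<Longrightarrow> vs 1 T \<le> vs 1 T'" "\<And>T. 0 \<le> vs 1 T"
    using assms(1) unfolding monotone_val_def by auto
  have m2: "\<And>T T'. T \<subseteq> T' \<Longrightarrow> vs 2 T \<le> vs 2 T'" "\<And>T. 0 \<le> vs 2 T"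
    using assms(2) unfolding monotone_val_def by auto
  have ab: "{ItemB, ItemA} = {ItemA, ItemB}" by auto
  have ma1: "vs 1 {} \<le> vs 1 {ItemA}" "vs 1 {} \<le> vs 1 {ItemB}" "vs 1 {ItemA} \<le> vs 1 {ItemA, ItemB}" "vs 1 {ItemB} \<le> vs 1 {ItemA, ItemB}"
    by (rule m1, blast)+
  have ma2: "vs 2 {} \<le> vs 2 {ItemA}" "vs 2 {} \<le> vs 2 {ItemB}" "vs 2 {ItemA} \<le> vs 2 {ItemA, ItemB}" "vs 2 {ItemB} \<le> vs 2 {ItemA, ItemB}"
    by (rule m2, blast)+
  let ?M = "M3_welfare tg ti vs"
  have sum: "(\<Sum>x\<in>{ItemA, ItemB}. \<Sum>i\<in>{1::nat, 2}. item_welfare (ti x i) vs x i)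
     = item_welfare (ti ItemA 1) vs ItemA 1 + item_welfare (ti ItemA 2) vs ItemA 2
     + item_welfare (ti ItemB 1) vs ItemB 1 + item_welfare (ti ItemB 2) vs ItemB 2"
    by simp
  have w1: "item_welfare (ti ItemA 1) vs ItemA 1 \<ge> vs 1 {ItemA, ItemB} + vs 2 {}"
           "item_welfare (ti ItemA 1) vs ItemA 1 \<ge> vs 1 {ItemA} + vs 2 {ItemB}"
           "item_welfare (ti ItemA 2) vs ItemA 2 \<ge> vs 2 {ItemA, ItemB} + vs 1 {}"
           "item_welfare (ti ItemA 2) vs ItemA 2 \<ge> vs 2 {ItemA} + vs 1 {ItemB}"
           "item_welfare (ti ItemB 1) vs ItemB 1 \<ge> vs 1 {ItemA, ItemB} + vs 2 {}"
           "item_welfare (ti ItemB 1) vs ItemB 1 \<ge> vs 1 {ItemB} + vs 2 {ItemA}"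
           "item_welfare (ti ItemB 2) vs ItemB 2 \<ge> vs 2 {ItemA, ItemB} + vs 1 {}"
           "item_welfare (ti ItemB 2) vs ItemB 2 \<ge> vs 2 {ItemB} + vs 1 {ItemA}"
    by (auto simp: item_welfare_def other_item_def other_bidder_def Let_def ab)
  have g: "(grand_welfare tg vs = vs 1 {ItemA, ItemB} + vs 2 {} \<and> vs 1 {ItemA, ItemB} \<ge> vs 2 {ItemA, ItemB})
     \<or> (grand_welfare tg vs = vs 2 {ItemA, ItemB} + vs 1 {} \<and> vs 2 {ItemA, ItemB} \<ge> vs 1 {ItemA, ItemB})"
    unfolding grand_welfare_def by auto
  have M: "?M = 1/3 * grand_welfare tg vs + 2/3 * ((item_welfare (ti ItemA 1) vs ItemA 1 + item_welfare (ti ItemA 2) vs ItemA 2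
     + item_welfare (ti ItemB 1) vs ItemB 1 + item_welfare (ti ItemB 2) vs ItemB 2) / 4)"
    unfolding M3_welfare_def sum by simp
  let ?S = "{vs 1 T1 + vs 2 T2 | T1 T2. T1 \<subseteq> {ItemA, ItemB} \<and> T2 \<subseteq> {ItemA, ItemB} \<and> T1 \<inter> T2 = {}}"
  have fin: "finite ?S"
  proof (rule finite_subset)
    show "?S \<subseteq> (\<lambda>(T1, T2). vs 1 T1 + vs 2 T2) ` (Pow {ItemA, ItemB} \<times> Pow {ItemA, ItemB})"
      by auto
  qed auto
  have ne: "?S \<noteq> {}" by blast
  have bound: "\<And>s. s \<in> ?S \<Longrightarrow> s \<le> 3/2 * ?M"
  proof -
    fix s assume "s \<in> ?S"
    then obtain T1 T2 where s: "s = vs 1 T1 + vs 2 T2" and t1: "T1 \<subseteq> {ItemA, ItemB}"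
      and t2: "T2 \<subseteq> {ItemA, ItemB}" and d: "T1 \<inter> T2 = {}" by blast
    have sv: "s = vs 1 {} + vs 2 {} \<or> s = vs 1 {ItemA} + vs 2 {} \<or> s = vs 1 {ItemB} + vs 2 {}
      \<or> s = vs 1 {ItemA, ItemB} + vs 2 {} \<or> s = vs 1 {} + vs 2 {ItemA} \<or> s = vs 1 {} + vs 2 {ItemB}
      \<or> s = vs 1 {} + vs 2 {ItemA, ItemB} \<or> s = vs 1 {ItemA} + vs 2 {ItemB} \<or> s = vs 1 {ItemB} + vs 2 {ItemA}"
      using pow_ab[OF t1] pow_ab[OF t2] d unfolding s by (elim disjE) (simp_all add: ab)
    have p1: "0 \<le> vs 1 {}" "0 \<le> vs 2 {}" using m1(2) m2(2) by auto
    show "s \<le> 3/2 * ?M"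
    proof -
      have "4 * s \<le> 2 * grand_welfare tg vs + (item_welfare (ti ItemA 1) vs ItemA 1 + item_welfare (ti ItemA 2) vs ItemA 2
     + item_welfare (ti ItemB 1) vs ItemB 1 + item_welfare (ti ItemB 2) vs ItemB 2)"
        using g sv by (insert ma1 ma2 w1 p1, elim disjE conjE; linarith)
      then show ?thesis unfolding M by (rule arith_aux)
    qed
  qed
  have "OPT vs \<le> 3/2 * ?M"
  proof -
    have "Max ?S \<le> 3/2 * ?M" using Max_le_iff[OF fin ne] bound by blast
    then show ?thesis unfolding OPT_def .
  qed
  then show ?thesis by simp
qed

end
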